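(* Let $X$ be a $\mathbb{Q}$-factorial projective toric variety defined over $\overline{\mathbb{Q}}$ and let $f\colon X\to X$ be a surjective toric morphism. Then the set of pre-periodic points of $f$ is Zariski dense in $X$.
   Context: A toric morphism is a morphism of toric varieties induced by a map of lattices compatible with the fans (equivariant with respect to the torus actions). A point $x$ is pre-periodic for $f$ if $f^{n}(x)=f^{m}(x)$ for some $0\le n<m$. *)

theory Defs
  imports "HOL-Analysis.Analysis" "HOL-Computational_Algebra.Polynomial"
begin

text \<open>Lattice N = int^n, dual lattice M = int^n, N_R = real^n; the pairing of m in M
  with u in N_R is the standard inner product after coercing m to real.\<close>

definition vreal :: "int ^ 'n \<Rightarrow> real ^ 'n" where
  "vreal m = (\<chi> i. real_of_int (m $ i))"

definition normal_cone :: "(real ^ 'n) set \<Rightarrow> (real ^ 'n) set \<Rightarrow> (real ^ 'n) set" where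
  "normal_cone P F = {u. \<forall>p\<in>P. \<forall>q\<in>F. q \<bullet> u \<le> p \<bullet> u}"

definition normal_fan :: "(real ^ 'n) set \<Rightarrow> (real ^ 'n) set set" where
  "normal_fan P = {normal_cone P F | F. F face_of P \<and> F \<noteq> {}}"

text \<open>A fan defines a projective toric variety iff it is the normal fan of a
  full-dimensional lattice polytope.\<close>
definition projective_fan :: "(real ^ 'n) set set \<Rightarrow> bool" where
  "projective_fan \<Sigma> \<longleftrightarrow> (\<exists>V :: (int ^ 'n) set. finite V \<and>
      interior (convex hull (vreal ` V)) \<noteq> {} \<and> \<Sigma> = normal_fan (convex hull (vreal ` V)))"

text \<open>Q-factorial iff the fan is simplicial.\<close>
definition simplicial_fan :: "(real ^ 'n) set set \<Rightarrow> bool" where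
  "simplicial_fan \<Sigma> \<longleftrightarrow> (\<forall>\<sigma>\<in>\<Sigma>. \<exists>B. independent B \<and> \<sigma> = convex_cone hull B)"

definition dual_lat :: "(real ^ 'n) set \<Rightarrow> (int ^ 'n) set" where
  "dual_lat \<sigma> = {m. \<forall>u\<in>\<sigma>. 0 \<le> vreal m \<bullet> u}"

definition perp_lat :: "(real ^ 'n) set \<Rightarrow> (int ^ 'n) set" where
  "perp_lat \<sigma> = {m. \<forall>u\<in>\<sigma>. vreal m \<bullet> u = 0}"

text \<open>Points of X_Sigma over Qbar (algebraic complex numbers), via the orbit-cone
  correspondence: a point is a pair (sigma, gamma) with sigma a cone of the fan and gamma a group
  homomorphism from the lattice perp_lat sigma to Qbar^*, extended by 0 outside. In the
  affine chart U_tau (sigma a face of tau) the point is the semigroup homomorphism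
  dual_lat tau -> Qbar given by gamma.\<close>
type_synonym 'n tpoint = "(real ^ 'n) set \<times> (int ^ 'n \<Rightarrow> complex)"

definition orbit_hom :: "(real ^ 'n) set \<Rightarrow> (int ^ 'n \<Rightarrow> complex) \<Rightarrow> bool" where
  "orbit_hom \<sigma> \<gamma> \<longleftrightarrow>
     (\<forall>m\<in>perp_lat \<sigma>. \<gamma> m \<noteq> 0 \<and> algebraic (\<gamma> m)) \<and>
     (\<forall>m\<in>perp_lat \<sigma>. \<forall>m'\<in>perp_lat \<sigma>. \<gamma> (m + m') = \<gamma> m * \<gamma> m') \<and>
     (\<forall>m. m \<notin> perp_lat \<sigma> \<longrightarrow> \<gamma> m = 0)"

definition toric_points :: "(real ^ 'n) set set \<Rightarrow> 'n tpoint set" where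
  "toric_points \<Sigma> = {(\<sigma>, \<gamma>). \<sigma> \<in> \<Sigma> \<and> orbit_hom \<sigma> \<gamma>}"

definition chart :: "(real ^ 'n) set set \<Rightarrow> (real ^ 'n) set \<Rightarrow> 'n tpoint set" where
  "chart \<Sigma> \<tau> = {p \<in> toric_points \<Sigma>. fst p face_of \<tau>}"

text \<open>Regular functions on U_tau over Qbar: finite Qbar-linear combinations of characters
  chi^m with m in dual_lat tau.\<close>
definition regular_fun :: "(real ^ 'n) set \<Rightarrow> (int ^ 'n \<Rightarrow> complex) \<Rightarrow> bool" where
  "regular_fun \<tau> g \<longleftrightarrow> finite {m. g m \<noteq> 0} \<and> {m. g m \<noteq> 0} \<subseteq> dual_lat \<tau> \<and>
     (\<forall>m. algebraic (g m))"

definition eval_fun :: "(int ^ 'n \<Rightarrow> complex) \<Rightarrow> 'n tpoint \<Rightarrow> complex" where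
  "eval_fun g p = (\<Sum>m\<in>{m. g m \<noteq> 0}. g m * snd p m)"

definition zariski_closed :: "(real ^ 'n) set set \<Rightarrow> 'n tpoint set \<Rightarrow> bool" where
  "zariski_closed \<Sigma> C \<longleftrightarrow> C \<subseteq> toric_points \<Sigma> \<and>
     (\<forall>\<tau>\<in>\<Sigma>. \<exists>G. (\<forall>g\<in>G. regular_fun \<tau> g) \<and>
        C \<inter> chart \<Sigma> \<tau> = {p \<in> chart \<Sigma> \<tau>. \<forall>g\<in>G. eval_fun g p = 0})"

definition zariski_dense :: "(real ^ 'n) set set \<Rightarrow> 'n tpoint set \<Rightarrow> bool" where
  "zariski_dense \<Sigma> S \<longleftrightarrow>
     (\<forall>C. zariski_closed \<Sigma> C \<and> S \<subseteq> C \<longrightarrow> C = toric_points \<Sigma>)"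

definition lat_map_real :: "int ^ 'n ^ 'n \<Rightarrow> real ^ 'n \<Rightarrow> real ^ 'n" where
  "lat_map_real A u = (\<chi> i. \<Sum>j\<in>UNIV. real_of_int (A $ i $ j) * u $ j)"

definition lat_map_dual :: "int ^ 'n ^ 'n \<Rightarrow> int ^ 'n \<Rightarrow> int ^ 'n" where
  "lat_map_dual A m = (\<chi> j. \<Sum>i\<in>UNIV. A $ i $ j * m $ i)"

definition compatible_lat_map :: "(real ^ 'n) set set \<Rightarrow> int ^ 'n ^ 'n \<Rightarrow> bool" where
  "compatible_lat_map \<Sigma> A \<longleftrightarrow> (\<forall>\<sigma>\<in>\<Sigma>. \<exists>\<sigma>'\<in>\<Sigma>. lat_map_real A ` \<sigma> \<subseteq> \<sigma>')"

definition target_cone :: "(real ^ 'n) set set \<Rightarrow> int ^ 'n ^ 'n \<Rightarrow> (real ^ 'n) set \<Rightarrow> (real ^ 'n) set" where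
  "target_cone \<Sigma> A \<sigma> = \<Inter>{\<tau>\<in>\<Sigma>. lat_map_real A ` \<sigma> \<subseteq> \<tau>}"

text \<open>The toric morphism induced by A on points: the orbit of sigma goes to the orbit of the
  smallest cone containing phi(sigma), and on characters it is given by the dual map.\<close>
definition toric_map :: "(real ^ 'n) set set \<Rightarrow> int ^ 'n ^ 'n \<Rightarrow> 'n tpoint \<Rightarrow> 'n tpoint" where
  "toric_map \<Sigma> A p = (let \<sigma>' = target_cone \<Sigma> A (fst p) in
      (\<sigma>', \<lambda>m. if m \<in> perp_lat \<sigma>' then snd p (lat_map_dual A m) else 0))"

definition preperiodic_points :: "('a \<Rightarrow> 'a) \<Rightarrow> 'a set \<Rightarrow> 'a set" where
  "preperiodic_points f X = {x\<in>X. \<exists>n m. n < m \<and> (f ^^ n) x = (f ^^ m) x}"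

end

theory Submission
  imports Defs
begin

definition idot :: "int ^ 'n \<Rightarrow> int ^ 'n \<Rightarrow> int" where
  "idot k m = (\<Sum>i\<in>UNIV. k $ i * m $ i)"

definition ex :: "int ^ 'n \<Rightarrow> nat \<Rightarrow> int ^ 'n \<Rightarrow> complex" where
  "ex k N m = exp (2 * of_real pi * \<i> * of_int (idot k m) / of_nat N)"

definition tor :: "int ^ 'n \<Rightarrow> nat \<Rightarrow> 'n tpoint" where
  "tor k N = ({0}, ex k N)"

definition Av :: "int ^ 'n ^ 'n \<Rightarrow> int ^ 'n \<Rightarrow> int ^ 'n" where
  "Av A k = (\<chi> i. \<Sum>j\<in>UNIV. A $ i $ j * k $ j)"

lemma idot_add: "idot k (m + m') = idot k m + idot k m'"
  unfolding idot_def by (simp add: distrib_left sum.distrib)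

lemma idot_dual: "idot k (lat_map_dual A m) = idot (Av A k) m"
proof -
  have "idot k (lat_map_dual A m) = (\<Sum>j\<in>UNIV. \<Sum>i\<in>UNIV. k $ j * (A $ i $ j * m $ i))"
    unfolding idot_def lat_map_dual_def by (simp add: sum_distrib_left)
  also have "\<dots> = (\<Sum>i\<in>UNIV. \<Sum>j\<in>UNIV. k $ j * (A $ i $ j * m $ i))"
    by (rule sum.swap)
  also have "\<dots> = idot (Av A k) m"
    unfolding idot_def Av_def by (simp add: sum_distrib_left sum_distrib_right mult_ac)
  finally show ?thesis .
qed

lemma perp_lat_0: "perp_lat {0} = UNIV"
  unfolding perp_lat_def by simp

lemma ex_add: "ex k N (m + m') = ex k N m * ex k N m'"
  unfolding ex_def idot_add by (simp add: exp_add[symmetric] distrib_left add_divide_distrib)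

lemma ex_pow: assumes "N > 0" shows "ex k N m ^ N = 1"
proof -
  have "ex k N m ^ N = exp (of_nat N * (2 * of_real pi * \<i> * of_int (idot k m) / of_nat N))"
    unfolding ex_def by (rule exp_of_nat_mult[symmetric])
  also have "\<dots> = exp (\<i> * (of_int (idot k m) * (of_real pi * 2)))"
    using assms by (simp add: field_simps)
  also have "\<dots> = 1" by simp
  finally show ?thesis .
qed

lemma ex_alg: assumes "N > 0" shows "algebraic (ex k N m)"
  by (rule algebraic_root[where y=1 and p="monom 1 N"]) (use assms ex_pow[OF assms] in \<open>auto simp: poly_monom coeff_monom degree_monom_eq\<close>)

lemma orbit_hom_tor: "N > 0 \<Longrightarrow> orbit_hom {0} (ex k N)"
  unfolding orbit_hom_def perp_lat_0 using ex_alg ex_add by (auto simp: ex_def)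


lemma const_zero:
  fixes P :: "(real ^ 'n) set"
  assumes "x \<in> interior P" "\<And>p. p \<in> P \<Longrightarrow> p \<bullet> u = x \<bullet> u"
  shows "u = 0"
proof (rule ccontr)
  assume u: "u \<noteq> 0"
  obtain e where e: "e > 0" "ball x e \<subseteq> P" using assms(1) mem_interior by blast
  define y where "y = x + (e / (2 * norm u)) *\<^sub>R u"
  have "dist x y = e / 2" using u e unfolding y_def dist_norm by simp
  then have "y \<in> P" using e by auto
  then have "y \<bullet> u = x \<bullet> u" using assms(2) by blast
  moreover have "y \<bullet> u = x \<bullet> u + e / 2 * norm u"
    using u unfolding y_def by (simp add: inner_add_left power2_norm_eq_inner[symmetric] power2_eq_square)
  ultimately show False using u e by simp
qed

lemma zero_in_nc: "0 \<in> normal_cone P F"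
  unfolding normal_cone_def by simp

lemma nc_self:
  fixes P :: "(real ^ 'n) set"
  assumes "x \<in> interior P"
  shows "normal_cone P P = {0}"
proof -
  have xP: "x \<in> P" using assms interior_subset by blast
  have "u = 0" if "u \<in> normal_cone P P" for u
  proof (rule const_zero[OF assms])
    fix p assume "p \<in> P"
    then have "p \<bullet> u \<le> x \<bullet> u" "x \<bullet> u \<le> p \<bullet> u" using that xP unfolding normal_cone_def by auto
    then show "p \<bullet> u = x \<bullet> u" by linarith
  qed
  then show ?thesis using zero_in_nc by blast
qed

lemma convex_nc:
  fixes P F :: "(real ^ 'n) set"
  shows "convex (normal_cone P F)"
  unfolding convex_def
proof (intro ballI allI impI)
  fix x y :: "real ^ 'n" and u v :: real
  assume xy: "x \<in> normal_cone P F" "y \<in> normal_cone P F" and uv: "0 \<le> u" "0 \<le> v" "u + v = 1"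
  show "u *\<^sub>R x + v *\<^sub>R y \<in> normal_cone P F"
    unfolding normal_cone_def
  proof (intro CollectI ballI)
    fix p q assume pq: "p \<in> P" "q \<in> F"
    have "q \<bullet> x \<le> p \<bullet> x" "q \<bullet> y \<le> p \<bullet> y" using xy pq unfolding normal_cone_def by auto
    then have "u * (q \<bullet> x) \<le> u * (p \<bullet> x)" "v * (q \<bullet> y) \<le> v * (p \<bullet> y)"
      using uv by (simp_all add: mult_left_mono)
    then show "q \<bullet> (u *\<^sub>R x + v *\<^sub>R y) \<le> p \<bullet> (u *\<^sub>R x + v *\<^sub>R y)"
      by (simp add: inner_add_right)
  qed
qed

lemma zero_face_nc:
  fixes P :: "(real ^ 'n) set"
  assumes "x \<in> interior P" "F \<noteq> {}"
  shows "{0} face_of normal_cone P F"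
  unfolding face_of_singleton extreme_point_of_def
proof (intro conjI zero_in_nc ballI notI)
  fix a b assume ab: "a \<in> normal_cone P F" "b \<in> normal_cone P F" "0 \<in> open_segment a b"
  then obtain t where t: "a \<noteq> b" "0 < t" "t < 1" "0 = (1 - t) *\<^sub>R a + t *\<^sub>R b"
    by (auto simp: in_segment)
  obtain q0 where q0: "q0 \<in> F" using assms(2) by blast
  have eq: "p \<bullet> a = q0 \<bullet> a \<and> p \<bullet> b = q0 \<bullet> b" if "p \<in> P" for p
  proof -
    have 1: "q0 \<bullet> a \<le> p \<bullet> a" "q0 \<bullet> b \<le> p \<bullet> b" using ab that q0 unfolding normal_cone_def by auto
    have "p \<bullet> ((1 - t) *\<^sub>R a + t *\<^sub>R b) = p \<bullet> 0" using t(4) by simp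
    then have "(1 - t) * (p \<bullet> a) + t * (p \<bullet> b) = p \<bullet> 0"
      by (simp add: inner_add_right)
    moreover have "q0 \<bullet> ((1 - t) *\<^sub>R a + t *\<^sub>R b) = q0 \<bullet> 0" using t(4) by simp
    then have "(1 - t) * (q0 \<bullet> a) + t * (q0 \<bullet> b) = q0 \<bullet> 0"
      by (simp add: inner_add_right)
    ultimately have "(1 - t) * (p \<bullet> a - q0 \<bullet> a) + t * (p \<bullet> b - q0 \<bullet> b) = 0"
      by (simp add: algebra_simps)
    moreover have "(1 - t) * (p \<bullet> a - q0 \<bullet> a) \<ge> 0" "t * (p \<bullet> b - q0 \<bullet> b) \<ge> 0"
      using 1 t by auto
    ultimately have "(1 - t) * (p \<bullet> a - q0 \<bullet> a) = 0" "t * (p \<bullet> b - q0 \<bullet> b) = 0" by linarith+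
    then show ?thesis using t by auto
  qed
  have xP: "x \<in> P" using assms interior_subset by blast
  have "a = 0" by (rule const_zero[OF assms(1)]) (use eq xP in auto)
  moreover have "b = 0" by (rule const_zero[OF assms(1)]) (use eq xP in auto)
  ultimately show False using t by simp
qed

lemma fan_props:
  fixes \<Sigma> :: "(real ^ 'n) set set"
  assumes "projective_fan \<Sigma>"
  shows "{0} \<in> \<Sigma>" "\<And>\<sigma>. \<sigma> \<in> \<Sigma> \<Longrightarrow> 0 \<in> \<sigma> \<and> convex \<sigma> \<and> {0} face_of \<sigma>"
proof -
  obtain V :: "(int ^ 'n) set" where V: "interior (convex hull (vreal ` V)) \<noteq> {}"
    "\<Sigma> = normal_fan (convex hull (vreal ` V))"
    using assms unfolding projective_fan_def by blast
  define P where "P = convex hull (vreal ` V)"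
  obtain x where x: "x \<in> interior P" using V P_def by blast
  have "P face_of P" unfolding P_def by (simp add: face_of_refl)
  moreover have "P \<noteq> {}" using x interior_subset by blast
  ultimately show "{0} \<in> \<Sigma>" using nc_self[OF x] unfolding V(2) normal_fan_def P_def[symmetric]
    by blast
  fix \<sigma> assume "\<sigma> \<in> \<Sigma>"
  then obtain F where "\<sigma> = normal_cone P F" "F \<noteq> {}"
    unfolding V(2) normal_fan_def P_def[symmetric] by blast
  then show "0 \<in> \<sigma> \<and> convex \<sigma> \<and> {0} face_of \<sigma>"
    using zero_in_nc convex_nc zero_face_nc[OF x] by blast
qed


lemma target0:
  assumes "{0} \<in> \<Sigma>" "\<And>\<sigma>. \<sigma> \<in> \<Sigma> \<Longrightarrow> (0 :: real ^ 'n) \<in> \<sigma>"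
  shows "target_cone \<Sigma> A {0 :: real ^ 'n} = {0}"
proof -
  have "lat_map_real A 0 = 0" unfolding lat_map_real_def by (simp add: vec_eq_iff)
  then have "{\<tau>\<in>\<Sigma>. lat_map_real A ` {0} \<subseteq> \<tau>} = \<Sigma>" using assms(2) by auto
  then show ?thesis unfolding target_cone_def using assms by auto
qed

lemma tmap_tor:
  assumes "{0} \<in> \<Sigma>" "\<And>\<sigma>. \<sigma> \<in> \<Sigma> \<Longrightarrow> (0 :: real ^ 'n) \<in> \<sigma>"
  shows "toric_map \<Sigma> A (tor k N) = tor (Av A k) N"
  unfolding toric_map_def tor_def using target0[OF assms]
  by (simp add: perp_lat_0 ex_def idot_dual fun_eq_iff)

lemma tor_iter:
  assumes "{0} \<in> \<Sigma>" "\<And>\<sigma>. \<sigma> \<in> \<Sigma> \<Longrightarrow> (0 :: real ^ 'n) \<in> \<sigma>"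
  shows "(toric_map \<Sigma> A ^^ j) (tor k N) = tor ((Av A ^^ j) k) N"
  by (induction j) (simp_all add: tmap_tor[OF assms])

lemma tor_mod:
  fixes k k' :: "int ^ 'n"
  assumes "N > 0" "\<And>i. k $ i mod int N = k' $ i mod int N"
  shows "tor k N = tor k' N"
proof -
  have "ex k N m = ex k' N m" for m
  proof -
    have "int N dvd (k $ i - k' $ i) * m $ i" for i
      using assms(2)[of i] by (simp add: mod_eq_dvd_iff)
    then have "int N dvd (\<Sum>i\<in>UNIV. (k $ i - k' $ i) * m $ i)" by (simp add: dvd_sum)
    then obtain t where t: "(\<Sum>i\<in>UNIV. (k $ i - k' $ i) * m $ i) = int N * t" by blast
    have "idot k m = idot k' m + int N * t"
      using t unfolding idot_def by (simp add: sum_subtractf left_diff_distrib)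
    then have "2 * of_real pi * \<i> * of_int (idot k m) / of_nat N =
        2 * of_real pi * \<i> * of_int (idot k' m) / of_nat N + \<i> * (of_int t * (of_real pi * 2))"
      using assms(1) by (simp add: field_simps)
    then show ?thesis unfolding ex_def by simp
  qed
  then show ?thesis unfolding tor_def by auto
qed

lemma tor_preper:
  assumes "{0} \<in> \<Sigma>" "\<And>\<sigma>. \<sigma> \<in> \<Sigma> \<Longrightarrow> (0 :: real ^ 'n) \<in> \<sigma>" "N > 0"
  shows "\<exists>n m. n < m \<and> (toric_map \<Sigma> A ^^ n) (tor k N) = (toric_map \<Sigma> A ^^ m) (tor k N)"
proof -
  define h where "h j = (\<lambda>i. (Av A ^^ j) k $ i mod int N)" for j
  have "range h \<subseteq> (\<Pi>\<^sub>E i\<in>UNIV. {0..<int N})"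
    using assms(3) unfolding h_def by auto
  moreover have "finite (\<Pi>\<^sub>E i\<in>(UNIV :: 'n set). {0..<int N})" by (simp add: finite_PiE)
  ultimately have "finite (range h)" by (rule finite_subset)
  then have "\<not> inj h" using finite_imageD by blast
  then obtain a b where ab: "a \<noteq> b" "h a = h b" unfolding inj_def by blast
  have eq: "tor ((Av A ^^ a) k) N = tor ((Av A ^^ b) k) N"
    by (rule tor_mod[OF assms(3)]) (use ab(2) in \<open>simp add: h_def fun_eq_iff\<close>)
  show ?thesis
  proof (cases "a < b")
    case True then show ?thesis using eq by (auto simp: tor_iter[OF assms(1,2)])
  next
    case False then have "b < a" using ab by simp
    then show ?thesis using eq by (metis tor_iter[OF assms(1,2)])
  qed
qed


lemma idot_diff: "idot w (m - m') = idot w m - idot w m'"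
  unfolding idot_def by (simp add: right_diff_distrib sum_subtractf)

lemma idot_pos:
  fixes d :: "int ^ 'n"
  assumes "d \<noteq> 0" shows "idot d d > 0"
proof -
  obtain i where i: "d $ i \<noteq> 0" using assms by (auto simp: vec_eq_iff)
  have "d $ i * d $ i \<le> (\<Sum>j\<in>UNIV. d $ j * d $ j)"
    by (rule member_le_sum) auto
  moreover have "d $ i * d $ i > 0" using i by (auto simp: zero_less_mult_iff linorder_neq_iff)
  ultimately show ?thesis unfolding idot_def by linarith
qed

lemma idot_lin: "idot (\<chi> i. M * w $ i + d $ i) x = M * idot w x + idot d x"
  unfolding idot_def by (simp add: distrib_right sum.distrib sum_distrib_left mult.assoc)

lemma sep:
  fixes D :: "(int ^ 'n) set"
  shows "finite D \<Longrightarrow> 0 \<notin> D \<Longrightarrow> \<exists>w. \<forall>d\<in>D. idot w d \<noteq> 0"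
proof (induction D rule: finite_induct)
  case empty then show ?case by simp
next
  case (insert d D)
  then obtain w where w: "\<forall>d'\<in>D. idot w d' \<noteq> 0" by auto
  show ?case
  proof (cases "idot w d = 0")
    case False then show ?thesis using w by auto
  next
    case True
    define M where "M = 1 + (\<Sum>d'\<in>D. \<bar>idot d d'\<bar>)"
    define w' where "w' = (\<chi> i. M * w $ i + d $ i)"
    have "d \<noteq> 0" using insert by auto
    then have "idot w' d \<noteq> 0" using True idot_pos[of d] unfolding w'_def idot_lin by simp
    moreover have "idot w' d' \<noteq> 0" if d': "d' \<in> D" for d'
    proof -
      have "\<bar>idot d d'\<bar> \<le> (\<Sum>d'\<in>D. \<bar>idot d d'\<bar>)"
        by (rule member_le_sum) (use d' insert in auto)
      then have lt: "\<bar>idot d d'\<bar> < M" unfolding M_def by simp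
      have "M \<ge> 1" unfolding M_def by (simp add: sum_nonneg)
      moreover have "\<bar>idot w d'\<bar> \<ge> 1" using w d' by auto
      ultimately have "\<bar>M * idot w d'\<bar> \<ge> M"
        by (simp add: abs_mult)
      then show ?thesis unfolding w'_def idot_lin using lt by linarith
    qed
    ultimately show ?thesis by auto
  qed
qed

lemma roots_inj:
  assumes "N > 0" "M > 0" "exp (2 * of_real pi * \<i> / of_nat N) = exp (2 * of_real pi * \<i> / of_nat M)"
  shows "N = M"
proof -
  obtain n :: int where n: "2 * of_real pi * \<i> / of_nat N = 2 * of_real pi * \<i> / of_nat M + (of_int (2 * n) * pi) * \<i>"
    using assms(3) exp_eq by blast
  then have "complex_of_real (2 * pi / real N) * \<i> = complex_of_real (2 * pi / real M + 2 * n * pi) * \<i>"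
    by (simp add: distrib_right)
  then have "2 * pi / real N = 2 * pi / real M + 2 * n * pi"
    by (metis complex_i_not_zero mult_cancel_right of_real_eq_iff)
  then have "(2*pi) * (1/real N) = (2*pi) * (1/real M + n)" by (simp add: distrib_left mult_ac)
  moreover have "2*pi \<noteq> 0" by simp
  ultimately have e: "1 / real N = 1 / real M + n" using mult_left_cancel by blast
  have "1 / real N \<le> 1" "1 / real M \<le> 1" "0 < 1 / real N" "0 < 1 / real M" using assms by auto
  moreover have "n \<ge> 1 \<or> n \<le> -1 \<or> n = 0" by linarith
  moreover have "n \<ge> 1 \<Longrightarrow> real_of_int n \<ge> 1" by simp
  moreover have "n \<le> -1 \<Longrightarrow> real_of_int n \<le> -1" by simp
  ultimately have "n = 0" using e by linarith
  then show ?thesis using e assms by simp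
qed


lemma key:
  fixes g :: "int ^ 'n \<Rightarrow> complex"
  assumes fin: "finite {m. g m \<noteq> 0}"
    and van: "\<And>k N. N > 0 \<Longrightarrow> (\<Sum>m\<in>{m. g m \<noteq> 0}. g m * ex k N m) = 0"
  shows "g m0 = 0"
proof (rule ccontr)
  assume m0: "g m0 \<noteq> 0"
  define S where "S = {m. g m \<noteq> 0}"
  have finS: "finite S" using fin S_def by simp
  define D where "D = (\<lambda>(m, m'). m - m') ` ((S \<times> S) - {(m, m'). m = m'})"
  have "finite D" unfolding D_def using finS by simp
  moreover have "0 \<notin> D" unfolding D_def by auto
  ultimately obtain w where w: "\<forall>d\<in>D. idot w d \<noteq> 0" using sep by blast
  have injw: "m = m'" if "m \<in> S" "m' \<in> S" "idot w m = idot w m'" for m m'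
  proof (rule ccontr)
    assume "m \<noteq> m'"
    then have "m - m' \<in> D" unfolding D_def using that by force
    then show False using w that(3) idot_diff[of w m m'] by auto
  qed
  define c where "c = - (\<Sum>m\<in>S. \<bar>idot w m\<bar>)"
  have cle: "c \<le> idot w m" if "m \<in> S" for m
  proof -
    have "\<bar>idot w m\<bar> \<le> (\<Sum>m\<in>S. \<bar>idot w m\<bar>)" by (rule member_le_sum) (use that finS in auto)
    then show ?thesis unfolding c_def by linarith
  qed
  define e where "e m = nat (idot w m - c)" for m
  have e_int: "int (e m) = idot w m - c" if "m \<in> S" for m
    using cle[OF that] unfolding e_def by simp
  have inje: "m = m'" if "m \<in> S" "m' \<in> S" "e m = e m'" for m m'
    using injw[OF that(1,2)] e_int[OF that(1)] e_int[OF that(2)] that(3) by simp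
  define p where "p = (\<Sum>m\<in>S. monom (g m) (e m))"
  define x where "x N = exp (2 * of_real pi * \<i> / of_nat N)" for N :: nat
  have root: "poly p (x N) = 0" if N: "N > 0" for N
  proof -
    have "ex w N m = x N ^ e m * exp (2 * of_real pi * \<i> * of_int c / of_nat N)" if "m \<in> S" for m
    proof -
      have "complex_of_int (idot w m) = of_nat (e m) + of_int c"
        using e_int[OF that] by (metis add.commute diff_add_cancel of_int_add of_int_of_nat_eq)
      then have "2 * of_real pi * \<i> * of_int (idot w m) / of_nat N =
          of_nat (e m) * (2 * of_real pi * \<i> / of_nat N) + 2 * of_real pi * \<i> * of_int c / of_nat N"
        by (simp add: field_simps add_divide_distrib)
      then show ?thesis unfolding ex_def x_def by (simp only: exp_add exp_of_nat_mult)
    qed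
    then have "0 = (\<Sum>m\<in>S. g m * (x N ^ e m * exp (2 * of_real pi * \<i> * of_int c / of_nat N)))"
      using van[OF N, of w] unfolding S_def[symmetric] by (metis (no_types, lifting) sum.cong)
    also have "\<dots> = poly p (x N) * exp (2 * of_real pi * \<i> * of_int c / of_nat N)"
      unfolding p_def by (simp add: poly_sum poly_monom sum_distrib_right mult_ac)
    finally show ?thesis by simp
  qed
  have "inj_on x {0<..}"
    by (rule inj_onI) (use roots_inj in \<open>auto simp: x_def\<close>)
  moreover have "infinite {0::nat<..}" by (simp add: infinite_Ioi)
  ultimately have "infinite (x ` {0<..})" using finite_imageD by blast
  moreover have "x ` {0<..} \<subseteq> {z. poly p z = 0}" using root by auto
  ultimately have "infinite {z. poly p z = 0}" using finite_subset by blast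
  then have p0: "p = 0" using poly_roots_finite by blast
  have m0S: "m0 \<in> S" using m0 S_def by simp
  have "coeff p (e m0) = (\<Sum>m\<in>S. if e m = e m0 then g m else 0)"
    unfolding p_def by (simp add: coeff_sum coeff_monom)
  also have "\<dots> = (\<Sum>m\<in>S. if m = m0 then g m else 0)"
    by (rule sum.cong) (use inje m0S in auto)
  also have "\<dots> = g m0" using finS m0S by simp
  finally show False using p0 m0 by simp
qed


theorem mainTheorem5:
  fixes \<Sigma> :: "(real ^ 'n) set set" and A :: "int ^ 'n ^ 'n"
  assumes "projective_fan \<Sigma>"
    and "simplicial_fan \<Sigma>"
    and "compatible_lat_map \<Sigma> A"
    and "toric_map \<Sigma> A ` toric_points \<Sigma> = toric_points \<Sigma>"
  shows "zariski_dense \<Sigma> (preperiodic_points (toric_map \<Sigma> A) (toric_points \<Sigma>))"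
  unfolding zariski_dense_def
proof (intro allI impI, elim conjE)
  fix C assume cl: "zariski_closed \<Sigma> C"
    and sub: "preperiodic_points (toric_map \<Sigma> A) (toric_points \<Sigma>) \<subseteq> C"
  have z: "{0} \<in> \<Sigma>" and props: "\<And>\<sigma>. \<sigma> \<in> \<Sigma> \<Longrightarrow> 0 \<in> \<sigma> \<and> convex \<sigma> \<and> {0} face_of \<sigma>"
    using fan_props[OF assms(1)] by auto
  have torC: "tor k N \<in> C" if N: "N > 0" for k N
  proof -
    have "tor k N \<in> toric_points \<Sigma>"
      unfolding tor_def toric_points_def using z orbit_hom_tor[OF N] by auto
    then have "tor k N \<in> preperiodic_points (toric_map \<Sigma> A) (toric_points \<Sigma>)"
      unfolding preperiodic_points_def using tor_preper[OF z _ N, of A k] props by blast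
    then show ?thesis using sub by blast
  qed
  show "C = toric_points \<Sigma>"
  proof
    show "C \<subseteq> toric_points \<Sigma>" using cl unfolding zariski_closed_def by blast
  next
    show "toric_points \<Sigma> \<subseteq> C"
    proof
      fix q assume q: "q \<in> toric_points \<Sigma>"
      then have \<sigma>: "fst q \<in> \<Sigma>" unfolding toric_points_def by auto
      obtain G where G: "\<forall>g\<in>G. regular_fun (fst q) g"
        "C \<inter> chart \<Sigma> (fst q) = {p \<in> chart \<Sigma> (fst q). \<forall>g\<in>G. eval_fun g p = 0}"
        using cl \<sigma> unfolding zariski_closed_def by blast
      have g0: "g m = 0" if g: "g \<in> G" for g m
      proof (rule key)
        show "finite {m. g m \<noteq> 0}" using G(1) g unfolding regular_fun_def by blast
        fix k :: "int ^ 'n" and N :: nat assume N: "N > 0"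
        have "tor k N \<in> chart \<Sigma> (fst q)"
          unfolding chart_def using torC[OF N] cl props[OF \<sigma>] unfolding zariski_closed_def
          by (auto simp: tor_def)
        then have "tor k N \<in> C \<inter> chart \<Sigma> (fst q)" using torC[OF N] by blast
        then have "eval_fun g (tor k N) = 0" using G(2) g by blast
        then show "(\<Sum>m\<in>{m. g m \<noteq> 0}. g m * ex k N m) = 0"
          unfolding eval_fun_def tor_def by simp
      qed
      have "q \<in> chart \<Sigma> (fst q)"
        unfolding chart_def using q props[OF \<sigma>] face_of_refl by blast
      moreover have "\<forall>g\<in>G. eval_fun g q = 0"
        unfolding eval_fun_def using g0 by simp
      ultimately show "q \<in> C" using G(2) by blast
    qed
  qed
qed

end
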